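(* Let $A$ be a hyperoperator on $\mathbb{R}^n$ on the complex Banach space $X$, let $f\in\mathcal{E}(\mathbb{R}^n,\mathbb{R}^m)$, and assume $f(a)x=0$ for all $x\in D_A$. Then $\sigma(A)\subset f^{-1}(0)$.
   Context: $X$ is a complex Banach space, $L(X)$ the bounded operators. $\mathcal{D}(\mathbb{R}^n)=C_c^\infty(\mathbb{R}^n)$ (complex-valued); $\mathcal{E}(\mathbb{R}^n,\mathbb{R}^m)$ the smooth maps $\mathbb{R}^n\to\mathbb{R}^m$. A hyperoperator on $\mathbb{R}^n$ is a linear map $A:\mathcal{D}(\mathbb{R}^n)\to L(X)$, continuous ($A(\phi_j)\to0$ in operator norm when $\phi_j\to0$ in $\mathcal{D}(\mathbb{R}^n)$), multiplicative, with (i) $D_A:=\bigcup_\phi\operatorname{Im}A(\phi)$ dense and (ii) $\bigcap_\phi\operatorname{Ker}A(\phi)=\{0\}$. For $x\in D_A$ written $x=A(\phi)y$, $f(a)x:=A(f\phi)y$ (well defined, componentwise). $\sigma(A)$ is the support of $A$ as an $L(X)$-valued distribution. *)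

theory Defs
  imports "HOL-Analysis.Analysis"
begin

fun iter_pderiv :: "'n::finite list \<Rightarrow> (real^'n \<Rightarrow> 'b::real_normed_vector) \<Rightarrow> real^'n \<Rightarrow> 'b" where
  "iter_pderiv [] f = f"
| "iter_pderiv (i # is) f = (\<lambda>x. frechet_derivative (iter_pderiv is f) (at x) (axis i 1))"

definition smooth :: "(real^'n::finite \<Rightarrow> 'b::real_normed_vector) \<Rightarrow> bool" where
  "smooth f \<longleftrightarrow> (\<forall>is. \<forall>x. iter_pderiv is f differentiable (at x))"

definition tsupp :: "(real^'n::finite \<Rightarrow> 'b::zero) \<Rightarrow> (real^'n) set" where
  "tsupp f = closure {x. f x \<noteq> 0}"

definition test_fun :: "(real^'n::finite \<Rightarrow> complex) \<Rightarrow> bool" where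
  "test_fun \<phi> \<longleftrightarrow> smooth \<phi> \<and> compact (tsupp \<phi>)"

definition test_tendsto_zero :: "(nat \<Rightarrow> real^'n::finite \<Rightarrow> complex) \<Rightarrow> bool" where
  "test_tendsto_zero \<phi>s \<longleftrightarrow>
     (\<forall>j. test_fun (\<phi>s j)) \<and>
     (\<exists>K. compact K \<and> (\<forall>j. tsupp (\<phi>s j) \<subseteq> K)) \<and>
     (\<forall>is. uniform_limit UNIV (\<lambda>j. iter_pderiv is (\<phi>s j)) (\<lambda>x. 0) sequentially)"

section \<open>Complex Banach spaces as real Banach spaces with a complex structure\<close>

text \<open>@J@ is multiplication by the imaginary unit.\<close>
definition cscale :: "('x::real_normed_vector \<Rightarrow>\<^sub>L 'x) \<Rightarrow> complex \<Rightarrow> 'x \<Rightarrow> 'x" where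
  "cscale J c x = Re c *\<^sub>R x + Im c *\<^sub>R blinfun_apply J x"

definition complex_structure :: "('x::real_normed_vector \<Rightarrow>\<^sub>L 'x) \<Rightarrow> bool" where
  "complex_structure J \<longleftrightarrow>
     (\<forall>x. blinfun_apply J (blinfun_apply J x) = - x) \<and>
     (\<forall>c x. norm (cscale J c x) = cmod c * norm x)"

text \<open>L(X): bounded complex-linear operators = bounded real-linear operators commuting with J.\<close>
definition cbounded_ops :: "('x::real_normed_vector \<Rightarrow>\<^sub>L 'x) \<Rightarrow> ('x \<Rightarrow>\<^sub>L 'x) set" where
  "cbounded_ops J = {T. T o\<^sub>L J = J o\<^sub>L T}"

definition op_cscale :: "('x::real_normed_vector \<Rightarrow>\<^sub>L 'x) \<Rightarrow> complex \<Rightarrow> ('x \<Rightarrow>\<^sub>L 'x) \<Rightarrow> ('x \<Rightarrow>\<^sub>L 'x)" where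
  "op_cscale J c T = Re c *\<^sub>R T + Im c *\<^sub>R (J o\<^sub>L T)"

definition hyp_domain :: "((real^'n::finite \<Rightarrow> complex) \<Rightarrow> ('x::real_normed_vector \<Rightarrow>\<^sub>L 'x)) \<Rightarrow> 'x set" where
  "hyp_domain A = (\<Union>\<phi>\<in>{\<phi>. test_fun \<phi>}. range (blinfun_apply (A \<phi>)))"

definition hyperoperator ::
  "('x::banach \<Rightarrow>\<^sub>L 'x) \<Rightarrow> ((real^'n::finite \<Rightarrow> complex) \<Rightarrow> ('x \<Rightarrow>\<^sub>L 'x)) \<Rightarrow> bool" where
  "hyperoperator J A \<longleftrightarrow>
     (\<forall>\<phi>. test_fun \<phi> \<longrightarrow> A \<phi> \<in> cbounded_ops J) \<and>
     (\<forall>\<phi> \<psi>. test_fun \<phi> \<longrightarrow> test_fun \<psi> \<longrightarrow> A (\<lambda>t. \<phi> t + \<psi> t) = A \<phi> + A \<psi>) \<and>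
     (\<forall>c \<phi>. test_fun \<phi> \<longrightarrow> A (\<lambda>t. c * \<phi> t) = op_cscale J c (A \<phi>)) \<and>
     (\<forall>\<phi>s. test_tendsto_zero \<phi>s \<longrightarrow> (\<lambda>j. A (\<phi>s j)) \<longlonglongrightarrow> 0) \<and>
     (\<forall>\<phi> \<psi>. test_fun \<phi> \<longrightarrow> test_fun \<psi> \<longrightarrow> A (\<lambda>t. \<phi> t * \<psi> t) = A \<phi> o\<^sub>L A \<psi>) \<and>
     closure (hyp_domain A) = UNIV \<and>
     (\<forall>x. (\<forall>\<phi>. test_fun \<phi> \<longrightarrow> blinfun_apply (A \<phi>) x = 0) \<longrightarrow> x = 0)"

text \<open>For a scalar smooth g and x = A(phi) y in D_A: g(a) x := A(g phi) y.\<close>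
definition hyp_fun_apply ::
  "((real^'n::finite \<Rightarrow> complex) \<Rightarrow> ('x::real_normed_vector \<Rightarrow>\<^sub>L 'x)) \<Rightarrow> (real^'n \<Rightarrow> real) \<Rightarrow> 'x \<Rightarrow> 'x" where
  "hyp_fun_apply A g x =
     (let (\<phi>, y) = (SOME (\<phi>, y). test_fun \<phi> \<and> x = blinfun_apply (A \<phi>) y)
      in blinfun_apply (A (\<lambda>t. complex_of_real (g t) * \<phi> t)) y)"

definition hyp_support ::
  "((real^'n::finite \<Rightarrow> complex) \<Rightarrow> ('x::real_normed_vector \<Rightarrow>\<^sub>L 'x)) \<Rightarrow> (real^'n) set" where
  "hyp_support A = UNIV - \<Union>{U. open U \<and> (\<forall>\<phi>. test_fun \<phi> \<and> tsupp \<phi> \<subseteq> U \<longrightarrow> A \<phi> = 0)}"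

end

theory Submission
  imports Defs
begin

definition smooth_on :: "(real^'n::finite) set \<Rightarrow> (real^'n \<Rightarrow> complex) \<Rightarrow> bool" where
  "smooth_on S h \<longleftrightarrow> (\<forall>is. \<forall>x\<in>S. iter_pderiv is h differentiable (at x))"

lemma local_deriv:
  fixes h1 h2 :: "real^'n::finite \<Rightarrow> 'b::real_normed_vector"
  assumes "open S" "x \<in> S" "\<forall>y\<in>S. h1 y = h2 y"
  shows "frechet_derivative h1 (at x) = frechet_derivative h2 (at x)
     \<and> (h1 differentiable (at x) \<longleftrightarrow> h2 differentiable (at x))"
proof -
  have eq: "\<And>D. (h1 has_derivative D) (at x) \<longleftrightarrow> (h2 has_derivative D) (at x)"
    using has_derivative_transform_within_open assms by (metis (no_types, lifting))
  show ?thesis unfolding frechet_derivative_def differentiable_def using eq by simp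
qed

lemma iter_local:
  fixes h1 h2 :: "real^'n::finite \<Rightarrow> 'b::real_normed_vector"
  assumes "open S" "\<forall>y\<in>S. h1 y = h2 y"
  shows "\<forall>y\<in>S. iter_pderiv ks h1 y = iter_pderiv ks h2 y"
proof (induction ks)
  case Nil thus ?case using assms by simp
next
  case (Cons i ks)
  show ?case using local_deriv[OF assms(1) _ Cons] by simp
qed

lemma iter_append: "iter_pderiv (ks @ js) h = iter_pderiv ks (iter_pderiv js h)"
  by (induction ks) auto

lemma smooth_on_family:
  fixes F :: "(real^'n::finite \<Rightarrow> complex) set"
  assumes S: "open S"
    and d: "\<And>h x. h \<in> F \<Longrightarrow> x \<in> S \<Longrightarrow> h differentiable (at x)"
    and p: "\<And>h i. h \<in> F \<Longrightarrow> \<exists>h'\<in>F. \<forall>x\<in>S. frechet_derivative h (at x) (axis i 1) = h' x"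
    and h: "h \<in> F"
  shows "smooth_on S h"
proof -
  have claim: "\<forall>h\<in>F. \<exists>h'\<in>F. \<forall>x\<in>S. iter_pderiv ks h x = h' x" for ks
  proof (induction ks)
    case Nil thus ?case by auto
  next
    case (Cons i ks)
    show ?case
    proof
      fix h assume "h \<in> F"
      then obtain h' where h': "h' \<in> F" "\<forall>x\<in>S. iter_pderiv ks h x = h' x" using Cons by blast
      obtain h'' where h'': "h'' \<in> F" "\<forall>x\<in>S. frechet_derivative h' (at x) (axis i 1) = h'' x"
        using p[OF h'(1)] by blast
      have "\<forall>x\<in>S. iter_pderiv (i # ks) h x = h'' x"
        using local_deriv[OF S _ h'(2)] h''(2) by simp
      thus "\<exists>h'\<in>F. \<forall>x\<in>S. iter_pderiv (i # ks) h x = h' x" using h''(1) by blast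
    qed
  qed
  show ?thesis unfolding smooth_on_def
  proof (intro allI ballI)
    fix ks x assume x: "x \<in> S"
    obtain h' where h': "h' \<in> F" "\<forall>x\<in>S. iter_pderiv ks h x = h' x" using claim h by blast
    show "iter_pderiv ks h differentiable (at x)"
      using local_deriv[OF S x h'(2)] d[OF h'(1) x] by simp
  qed
qed

inductive_set FS :: "(real^'n::finite) set \<Rightarrow> (real^'n \<Rightarrow> complex) set" for S where
  base: "smooth_on S h \<Longrightarrow> h \<in> FS S"
| add: "h1 \<in> FS S \<Longrightarrow> h2 \<in> FS S \<Longrightarrow> (\<lambda>x. h1 x + h2 x) \<in> FS S"
| mul: "h1 \<in> FS S \<Longrightarrow> h2 \<in> FS S \<Longrightarrow> (\<lambda>x. h1 x * h2 x) \<in> FS S"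
| neg: "h1 \<in> FS S \<Longrightarrow> (\<lambda>x. - h1 x) \<in> FS S"
| inv: "smooth_on S g \<Longrightarrow> (\<forall>x\<in>S. g x \<noteq> 0) \<Longrightarrow> (\<lambda>x. inverse (g x)) \<in> FS S"

lemma smooth_on_deriv:
  assumes "smooth_on S h"
  shows "smooth_on S (\<lambda>x. frechet_derivative h (at x) (axis i 1))"
proof -
  have "(\<lambda>x. frechet_derivative h (at x) (axis i 1)) = iter_pderiv [i] h" by simp
  thus ?thesis using assms unfolding smooth_on_def by (metis iter_append)
qed

lemma FS_props:
  assumes "h \<in> FS S"
  shows "(\<forall>x\<in>S. h differentiable (at x)) \<and>
         (\<forall>i. \<exists>h'\<in>FS S. \<forall>x\<in>S. frechet_derivative h (at x) (axis i 1) = h' x)"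
  using assms
proof (induction rule: FS.induct)
  case (base h)
  have "\<forall>x\<in>S. h differentiable (at x)" using base unfolding smooth_on_def
    by (metis iter_pderiv.simps(1))
  moreover have "\<exists>h'\<in>FS S. \<forall>x\<in>S. frechet_derivative h (at x) (axis i 1) = h' x" for i
    using FS.base[OF smooth_on_deriv[OF base, of i]] by (intro bexI[of _ "\<lambda>x. frechet_derivative h (at x) (axis i 1)"]) auto
  ultimately show ?case by blast
next
  case (add h1 h2)
  have "\<exists>h'\<in>FS S. \<forall>x\<in>S. frechet_derivative (\<lambda>x. h1 x + h2 x) (at x) (axis i 1) = h' x" for i
  proof -
    obtain a where a: "a \<in> FS S" "\<forall>x\<in>S. frechet_derivative h1 (at x) (axis i 1) = a x" using add by blast
    obtain b where b: "b \<in> FS S" "\<forall>x\<in>S. frechet_derivative h2 (at x) (axis i 1) = b x" using add by blast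
    have "\<forall>x\<in>S. frechet_derivative (\<lambda>x. h1 x + h2 x) (at x) (axis i 1) = a x + b x"
    proof
      fix x assume x: "x \<in> S"
      have "((\<lambda>x. h1 x + h2 x) has_derivative (\<lambda>v. frechet_derivative h1 (at x) v + frechet_derivative h2 (at x) v)) (at x)"
        using add x by (intro has_derivative_add) (auto simp: frechet_derivative_works)
      from frechet_derivative_at[OF this, symmetric] show "frechet_derivative (\<lambda>x. h1 x + h2 x) (at x) (axis i 1) = a x + b x"
        using a b x by simp
    qed
    thus ?thesis using FS.add[OF a(1) b(1)] by (intro bexI[of _ "\<lambda>x. a x + b x"]) auto
  qed
  thus ?case using add by auto
next
  case (mul h1 h2)
  have "\<exists>h'\<in>FS S. \<forall>x\<in>S. frechet_derivative (\<lambda>x. h1 x * h2 x) (at x) (axis i 1) = h' x" for i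
  proof -
    obtain a where a: "a \<in> FS S" "\<forall>x\<in>S. frechet_derivative h1 (at x) (axis i 1) = a x" using mul by blast
    obtain b where b: "b \<in> FS S" "\<forall>x\<in>S. frechet_derivative h2 (at x) (axis i 1) = b x" using mul by blast
    have "\<forall>x\<in>S. frechet_derivative (\<lambda>x. h1 x * h2 x) (at x) (axis i 1) = h1 x * b x + a x * h2 x"
    proof
      fix x assume x: "x \<in> S"
      have "((\<lambda>x. h1 x * h2 x) has_derivative (\<lambda>v. h1 x * frechet_derivative h2 (at x) v + frechet_derivative h1 (at x) v * h2 x)) (at x)"
        using mul x by (intro has_derivative_mult) (auto simp: frechet_derivative_works)
      from frechet_derivative_at[OF this, symmetric] show "frechet_derivative (\<lambda>x. h1 x * h2 x) (at x) (axis i 1) = h1 x * b x + a x * h2 x"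
        using a b x by simp
    qed
    moreover have "(\<lambda>x. h1 x * b x + a x * h2 x) \<in> FS S"
      using mul a b by (intro FS.add FS.mul) auto
    ultimately show ?thesis by (intro bexI[of _ "\<lambda>x. h1 x * b x + a x * h2 x"]) auto
  qed
  moreover have "\<forall>x\<in>S. (\<lambda>x. h1 x * h2 x) differentiable (at x)"
    using mul by (auto intro: differentiable_mult)
  ultimately show ?case by blast
next
  case (neg h1)
  have "\<exists>h'\<in>FS S. \<forall>x\<in>S. frechet_derivative (\<lambda>x. - h1 x) (at x) (axis i 1) = h' x" for i
  proof -
    obtain a where a: "a \<in> FS S" "\<forall>x\<in>S. frechet_derivative h1 (at x) (axis i 1) = a x" using neg by blast
    have "\<forall>x\<in>S. frechet_derivative (\<lambda>x. - h1 x) (at x) (axis i 1) = - a x"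
    proof
      fix x assume x: "x \<in> S"
      have "((\<lambda>x. - h1 x) has_derivative (\<lambda>v. - frechet_derivative h1 (at x) v)) (at x)"
        using neg x by (intro has_derivative_minus) (auto simp: frechet_derivative_works)
      from frechet_derivative_at[OF this, symmetric] show "frechet_derivative (\<lambda>x. - h1 x) (at x) (axis i 1) = - a x"
        using a x by simp
    qed
    thus ?thesis using FS.neg[OF a(1)] by (intro bexI[of _ "\<lambda>x. - a x"]) auto
  qed
  moreover have "\<forall>x\<in>S. (\<lambda>x. - h1 x) differentiable (at x)"
    using neg by (auto intro: differentiable_minus)
  ultimately show ?case by blast
next
  case (inv g)
  have gd: "\<forall>x\<in>S. g differentiable (at x)" using inv unfolding smooth_on_def
    by (metis iter_pderiv.simps(1))
  let ?a = "\<lambda>i x. frechet_derivative g (at x) (axis i 1)"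
  have "\<exists>h'\<in>FS S. \<forall>x\<in>S. frechet_derivative (\<lambda>x. inverse (g x)) (at x) (axis i 1) = h' x" for i
  proof -
    have "\<forall>x\<in>S. frechet_derivative (\<lambda>x. inverse (g x)) (at x) (axis i 1) = - (inverse (g x) * ?a i x * inverse (g x))"
    proof
      fix x assume x: "x \<in> S"
      have "((\<lambda>x. inverse (g x)) has_derivative (\<lambda>v. - (inverse (g x) * frechet_derivative g (at x) v * inverse (g x)))) (at x)"
        using inv gd x by (intro Deriv.has_derivative_inverse) (auto simp: frechet_derivative_works)
      from frechet_derivative_at[OF this, symmetric] show "frechet_derivative (\<lambda>x. inverse (g x)) (at x) (axis i 1) = - (inverse (g x) * ?a i x * inverse (g x))"
        by simp
    qed
    moreover have "(\<lambda>x. - (inverse (g x) * ?a i x * inverse (g x))) \<in> FS S"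
      using inv by (intro FS.neg FS.mul FS.inv FS.base smooth_on_deriv) auto
    ultimately show ?thesis by (intro bexI[of _ "\<lambda>x. - (inverse (g x) * ?a i x * inverse (g x))"]) auto
  qed
  moreover have "\<forall>x\<in>S. (\<lambda>x. inverse (g x)) differentiable (at x)"
    using inv gd by (auto intro!: differentiable_inverse)
  ultimately show ?case by blast
qed

lemma FS_smooth: "open S \<Longrightarrow> h \<in> FS S \<Longrightarrow> smooth_on S h"
  using smooth_on_family[of S "FS S" h] FS_props by blast

lemma smooth_iff: "smooth h \<longleftrightarrow> smooth_on UNIV h"
  unfolding smooth_def smooth_on_def by auto

lemma smooth_cover: "smooth_on V h \<Longrightarrow> smooth_on W h \<Longrightarrow> V \<union> W = UNIV \<Longrightarrow> smooth h"
  unfolding smooth_def smooth_on_def by blast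

lemma smooth_on_zero:
  fixes h :: "real^'n::finite \<Rightarrow> complex"
  assumes W: "open W" and z: "\<forall>x\<in>W. h x = 0"
  shows "smooth_on W h"
proof (rule smooth_on_family[of W "{h. \<forall>x\<in>W. h x = 0}"])
  fix g :: "real^'n \<Rightarrow> complex" and x assume g: "g \<in> {h. \<forall>x\<in>W. h x = 0}" and x: "x \<in> W"
  have "(\<lambda>_. 0::complex) differentiable (at x)" by simp
  thus "g differentiable (at x)" using local_deriv[OF W x, of g "\<lambda>_. 0"] g by auto
next
  fix g :: "real^'n \<Rightarrow> complex" and i assume g: "g \<in> {h. \<forall>x\<in>W. h x = 0}"
  have "\<forall>x\<in>W. frechet_derivative g (at x) (axis i 1) = 0"
  proof
    fix x assume x: "x \<in> W"
    have "frechet_derivative g (at x) = frechet_derivative (\<lambda>_. 0::complex) (at x)"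
      using local_deriv[OF W x, of g "\<lambda>_. 0"] g by auto
    also have "\<dots> = (\<lambda>_. 0)"
      using frechet_derivative_at[OF has_derivative_const[of "0::complex"]] by simp
    finally show "frechet_derivative g (at x) (axis i 1) = 0" by simp
  qed
  thus "\<exists>h'\<in>{h. \<forall>x\<in>W. h x = 0}. \<forall>x\<in>W. frechet_derivative g (at x) (axis i 1) = h' x"
    by (intro bexI[of _ "\<lambda>_. 0"]) auto
qed (use assms in auto)

lemma smooth_component:
  fixes f :: "real^'n::finite \<Rightarrow> real^'m::finite"
  assumes "smooth f"
  shows "smooth (\<lambda>t. complex_of_real (f t $ k))"
proof -
  let ?F = "{(\<lambda>t. complex_of_real (iter_pderiv ks f t $ k)) | ks. True}"
  have bl: "bounded_linear (\<lambda>v::real^'m. complex_of_real (v $ k))"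
    using bounded_linear_compose[OF bounded_linear_of_real bounded_linear_vec_nth[of k]] by (simp add: o_def)
  have "smooth_on UNIV (\<lambda>t. complex_of_real (iter_pderiv [] f t $ k))"
  proof (rule smooth_on_family[of UNIV ?F])
    fix g x assume "g \<in> ?F"
    then obtain ks where g: "g = (\<lambda>t. complex_of_real (iter_pderiv ks f t $ k))" by blast
    have "iter_pderiv ks f differentiable (at x)" using assms unfolding smooth_def by blast
    then have "((\<lambda>t. complex_of_real (iter_pderiv ks f t $ k)) has_derivative
        (\<lambda>v. complex_of_real (frechet_derivative (iter_pderiv ks f) (at x) v $ k))) (at x)"
      using bounded_linear.has_derivative[OF bl] frechet_derivative_works by blast
    thus "g differentiable (at x)" unfolding g differentiable_def by blast
  next
    fix g i assume "g \<in> ?F"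
    then obtain ks where g: "g = (\<lambda>t. complex_of_real (iter_pderiv ks f t $ k))" by blast
    have "\<forall>x\<in>UNIV. frechet_derivative g (at x) (axis i 1) = complex_of_real (iter_pderiv (i # ks) f x $ k)"
    proof
      fix x :: "real^'n"
      have "iter_pderiv ks f differentiable (at x)" using assms unfolding smooth_def by blast
      then have "((\<lambda>t. complex_of_real (iter_pderiv ks f t $ k)) has_derivative
          (\<lambda>v. complex_of_real (frechet_derivative (iter_pderiv ks f) (at x) v $ k))) (at x)"
        using bounded_linear.has_derivative[OF bl] frechet_derivative_works by blast
      from frechet_derivative_at[OF this, symmetric]
      show "frechet_derivative g (at x) (axis i 1) = complex_of_real (iter_pderiv (i # ks) f x $ k)"
        unfolding g by simp
    qed
    thus "\<exists>h'\<in>?F. \<forall>x\<in>UNIV. frechet_derivative g (at x) (axis i 1) = h' x"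
      by (intro bexI[of _ "\<lambda>t. complex_of_real (iter_pderiv (i # ks) f t $ k)"]) (auto intro!: exI[of _ "i # ks"])
  qed (auto intro!: exI[of _ "[]"])
  thus ?thesis by (simp add: smooth_iff)
qed

lemma test_mult:
  assumes "smooth g" "test_fun ch"
  shows "test_fun (\<lambda>t. g t * ch t)"
proof -
  have "(\<lambda>t. g t * ch t) \<in> FS UNIV"
    using assms by (intro FS.mul FS.base) (auto simp: smooth_iff test_fun_def)
  hence s: "smooth (\<lambda>t. g t * ch t)" using FS_smooth smooth_iff by blast
  have "tsupp (\<lambda>t. g t * ch t) \<subseteq> tsupp ch" unfolding tsupp_def
    by (intro closure_mono) auto
  moreover have "closed (tsupp (\<lambda>t. g t * ch t))" unfolding tsupp_def by simp
  ultimately have "compact (tsupp (\<lambda>t. g t * ch t))"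
    using assms(2) unfolding test_fun_def by (metis compact_Int_closed inf.absorb2)
  thus ?thesis using s unfolding test_fun_def by simp
qed

theorem corollary5p5:
  fixes J :: "'x::banach \<Rightarrow>\<^sub>L 'x"
    and A :: "(real^'n::finite \<Rightarrow> complex) \<Rightarrow> ('x \<Rightarrow>\<^sub>L 'x)"
    and f :: "real^'n \<Rightarrow> real^'m::finite"
  assumes "complex_structure J"
    and "hyperoperator J A"
    and "smooth f"
    and "\<forall>x\<in>hyp_domain A. \<forall>k. hyp_fun_apply A (\<lambda>t. f t $ k) x = 0"
  shows "hyp_support A \<subseteq> f -` {0}"
proof
  have mult: "\<And>\<phi> \<psi>. test_fun \<phi> \<Longrightarrow> test_fun \<psi> \<Longrightarrow> A (\<lambda>t. \<phi> t * \<psi> t) = A \<phi> o\<^sub>L A \<psi>"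
    and sep: "\<And>x. (\<forall>\<phi>. test_fun \<phi> \<longrightarrow> blinfun_apply (A \<phi>) x = 0) \<Longrightarrow> x = 0"
    using assms(2) unfolding hyperoperator_def by (meson, meson)
  fix t0 assume t0: "t0 \<in> hyp_support A"
  show "t0 \<in> f -` {0}"
  proof (rule ccontr)
    assume "t0 \<notin> f -` {0}"
    then obtain k where k: "f t0 $ k \<noteq> 0" by (auto simp: vec_eq_iff)
    define g where "g = (\<lambda>t. complex_of_real (f t $ k))"
    have gs: "smooth g" unfolding g_def using smooth_component[OF assms(3)] .
    have Wd: "blinfun_apply (A (\<lambda>t. g t * ch t)) y = 0" if ch: "test_fun ch" for ch y
    proof -
      let ?x = "blinfun_apply (A ch) y"
      have "?x \<in> hyp_domain A" unfolding hyp_domain_def using ch by blast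
      hence h0: "hyp_fun_apply A (\<lambda>t. f t $ k) ?x = 0" using assms(4) by blast
      let ?P = "\<lambda>(\<phi>, y'). test_fun \<phi> \<and> ?x = blinfun_apply (A \<phi>) y'"
      define p where "p = (SOME p. ?P p)"
      have "?P (ch, y)" using ch by simp
      hence "?P p" unfolding p_def by (rule someI)
      then obtain \<phi> y' where p: "p = (\<phi>, y')" and \<phi>: "test_fun \<phi>" and xe: "?x = blinfun_apply (A \<phi>) y'"
        by (cases p) auto
      have z: "blinfun_apply (A (\<lambda>t. g t * \<phi> t)) y' = 0"
        using h0 unfolding hyp_fun_apply_def p_def[symmetric] p g_def by simp
      show ?thesis
      proof (rule sep, intro allI impI)
        fix \<theta> :: "real^'n \<Rightarrow> complex" assume th: "test_fun \<theta>"
        have gth: "test_fun (\<lambda>t. g t * \<theta> t)" by (rule test_mult[OF gs th])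
        have "blinfun_apply (A \<theta>) (blinfun_apply (A (\<lambda>t. g t * ch t)) y)
              = blinfun_apply (A (\<lambda>t. \<theta> t * (g t * ch t))) y"
          using mult[OF th test_mult[OF gs ch]] by simp
        also have "(\<lambda>t. \<theta> t * (g t * ch t)) = (\<lambda>t. (g t * \<theta> t) * ch t)"
          by (simp add: algebra_simps)
        also have "blinfun_apply (A \<dots>) y = blinfun_apply (A (\<lambda>t. g t * \<theta> t)) ?x"
          using mult[OF gth ch] by simp
        also have "\<dots> = blinfun_apply (A (\<lambda>t. (g t * \<theta> t) * \<phi> t)) y'"
          using mult[OF gth \<phi>] xe by simp
        also have "(\<lambda>t. (g t * \<theta> t) * \<phi> t) = (\<lambda>t. \<theta> t * (g t * \<phi> t))"
          by (simp add: algebra_simps)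
        also have "blinfun_apply (A \<dots>) y' = blinfun_apply (A \<theta>) (blinfun_apply (A (\<lambda>t. g t * \<phi> t)) y')"
          using mult[OF th test_mult[OF gs \<phi>]] by simp
        also have "\<dots> = 0" using z by simp
        finally show "blinfun_apply (A \<theta>) (blinfun_apply (A (\<lambda>t. g t * ch t)) y) = 0" .
      qed
    qed
    define V where "V = {t. f t $ k \<noteq> 0}"
    have fd: "\<And>x. f differentiable (at x)" using assms(3) unfolding smooth_def
      by (metis iter_pderiv.simps(1))
    have "continuous_on UNIV f"
      using fd differentiable_imp_continuous_within continuous_at_imp_continuous_on by blast
    hence "continuous_on UNIV (\<lambda>t. f t $ k)"
      by (intro continuous_intros)
    hence Vo: "open V" unfolding V_def by (intro open_Collect_neq) auto
    have "\<forall>\<phi>. test_fun \<phi> \<and> tsupp \<phi> \<subseteq> V \<longrightarrow> A \<phi> = 0"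
    proof (intro allI impI)
      fix \<phi> assume "test_fun \<phi> \<and> tsupp \<phi> \<subseteq> V"
      hence \<phi>: "test_fun \<phi>" and sV: "tsupp \<phi> \<subseteq> V" by auto
      define \<psi> where "\<psi> = (\<lambda>t. \<phi> t * inverse (g t))"
      have sub: "{x. \<phi> x \<noteq> 0} \<subseteq> tsupp \<phi>" unfolding tsupp_def by (rule closure_subset)
      have eq: "\<phi> = (\<lambda>t. g t * \<psi> t)"
      proof
        fix t show "\<phi> t = g t * \<psi> t"
        proof (cases "g t = 0")
          case True
          hence "t \<notin> V" unfolding V_def g_def by simp
          hence "\<phi> t = 0" using sub sV by blast
          thus ?thesis using True by (simp add: \<psi>_def)
        next
          case False thus ?thesis by (simp add: \<psi>_def)
        qed
      qed
      have sonV: "smooth_on V \<psi>"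
      proof -
        have s1: "smooth_on V \<phi>" using \<phi> unfolding test_fun_def smooth_def smooth_on_def by blast
        have s2: "smooth_on V g" using gs unfolding smooth_def smooth_on_def by blast
        have s3: "\<forall>x\<in>V. g x \<noteq> 0" unfolding V_def g_def by simp
        have "\<psi> \<in> FS V" unfolding \<psi>_def
          by (rule FS.mul[OF FS.base[OF s1] FS.inv[OF s2 s3]])
        thus ?thesis using FS_smooth Vo by blast
      qed
      have sonW: "smooth_on (- tsupp \<phi>) \<psi>"
        by (rule smooth_on_zero) (use sub in \<open>auto simp: tsupp_def \<psi>_def\<close>)
      have "V \<union> - tsupp \<phi> = UNIV" using sV by blast
      hence s\<psi>: "smooth \<psi>" using smooth_cover[OF sonV sonW] by blast
      have "tsupp \<psi> \<subseteq> tsupp \<phi>" unfolding tsupp_def \<psi>_def by (intro closure_mono) auto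
      moreover have "closed (tsupp \<psi>)" unfolding tsupp_def by simp
      ultimately have "compact (tsupp \<psi>)"
        using \<phi> unfolding test_fun_def by (metis compact_Int_closed inf.absorb2)
      hence t\<psi>: "test_fun \<psi>" using s\<psi> unfolding test_fun_def by simp
      show "A \<phi> = 0" unfolding eq
        by (rule blinfun_eqI) (simp add: Wd[OF t\<psi>])
    qed
    moreover have "t0 \<in> V" unfolding V_def using k by simp
    ultimately have "V \<in> {U. open U \<and> (\<forall>\<phi>. test_fun \<phi> \<and> tsupp \<phi> \<subseteq> U \<longrightarrow> A \<phi> = 0)}"
      "t0 \<in> V" using Vo by auto
    hence "t0 \<notin> hyp_support A" unfolding hyp_support_def by (meson DiffD2 UnionI)
    thus False using t0 by blast
  qed
qed

end
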